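(* Let $p>1$ and let $f$ be a smooth positive solution of $\frac{\partial f}{\partial t}=\Delta f+f^p$ on $\mathbb{R}^n\times[0,T)$. Let $c$ be a constant satisfying $0<n(p-1)\le c<2$. If at some point $(x_0,t_0)$ $$f(x_0,t_0)\ge\left(\frac{4n}{2-c}\right)^{1/(p-1)},$$ then $f$ blows up in finite time, i.e. $f$ cannot exist as a positive smooth solution on all of $\mathbb{R}^n\times[0,\infty)$, and it becomes unbounded at some finite time.
   Context: $\Delta$ denotes the spatial Laplacian on $\mathbb{R}^n$. *)

theory Defs
  imports "HOL-Analysis.Analysis"
begin

fun iter_dderiv :: "'a::real_normed_vector list \<Rightarrow> ('a \<Rightarrow> real) \<Rightarrow> 'a \<Rightarrow> real" where
  "iter_dderiv [] g = g"
| "iter_dderiv (v # vs) g = (\<lambda>x. deriv (\<lambda>s. iter_dderiv vs g (x + s *\<^sub>R v)) 0)"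

definition smooth_fun_on :: "'a::real_normed_vector set \<Rightarrow> ('a \<Rightarrow> real) \<Rightarrow> bool" where
  "smooth_fun_on S g \<longleftrightarrow>
     (\<forall>vs. continuous_on S (iter_dderiv vs g) \<and>
       (\<forall>v. \<forall>x\<in>S. (\<lambda>s. iter_dderiv vs g (x + s *\<^sub>R v)) differentiable (at 0)))"

definition laplacian :: "(real^'n \<Rightarrow> real) \<Rightarrow> real^'n \<Rightarrow> real" where
  "laplacian u x = (\<Sum>i\<in>UNIV. deriv (deriv (\<lambda>s. u (x + s *\<^sub>R axis i 1))) 0)"

definition global_pos_solution :: "real \<Rightarrow> (real^'n \<Rightarrow> real \<Rightarrow> real) \<Rightarrow> bool" where
  "global_pos_solution p f \<longleftrightarrow>
     smooth_fun_on (UNIV \<times> {0<..}) (\<lambda>(x, t). f x t) \<and>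
     continuous_on (UNIV \<times> {0..}) (\<lambda>(x, t). f x t) \<and>
     (\<forall>x t. t \<ge> 0 \<longrightarrow> f x t > 0) \<and>
     (\<forall>x t. t > 0 \<longrightarrow> deriv (\<lambda>s. f x s) t = laplacian (\<lambda>y. f y t) x + f x t powr p)"

end

theory Submission
  imports Defs
begin


definition psi :: "real \<Rightarrow> real" where "psi y = (max 0 (1 - y\<^sup>2))^3"
definition psi1 :: "real \<Rightarrow> real" where "psi1 y = -6 * y * (max 0 (1 - y\<^sup>2))^2"
definition psi2 :: "real \<Rightarrow> real" where "psi2 y = max 0 (1 - y\<^sup>2) * (30 * y\<^sup>2 - 6)"

lemma psi_if: "psi = (\<lambda>y. if y \<in> {y. y\<^sup>2 < 1} then (1 - y\<^sup>2)^3 else 0)"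
  by (auto simp: psi_def fun_eq_iff max_def)
lemma psi1_if: "psi1 = (\<lambda>y. if y \<in> {y. y\<^sup>2 < 1} then -6 * y * (1 - y\<^sup>2)^2 else 0)"
  by (auto simp: psi1_def fun_eq_iff max_def)

lemma closure_lt1: "closure {y::real. y\<^sup>2 < 1} = {y. y\<^sup>2 \<le> 1}"
proof -
  have "{y::real. y\<^sup>2 < 1} = {-1<..<1}" by (auto simp: abs_square_less_1)
  moreover have "{y::real. y\<^sup>2 \<le> 1} = {-1..1}" by (auto simp: abs_square_le_1)
  ultimately show ?thesis by simp
qed

lemma closure_ge1: "closure {y::real. \<not> y\<^sup>2 < 1} = {y. \<not> y\<^sup>2 < 1}"
proof -
  have "closed {y::real. 1 \<le> y\<^sup>2}" by (intro closed_Collect_le continuous_intros)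
  then show ?thesis by (simp add: not_less)
qed

lemma psi_deriv: "(psi has_real_derivative psi1 y) (at y)"
proof -
  let ?S = "{y::real. y\<^sup>2 < 1}" and ?T = "{y::real. \<not> y\<^sup>2 < 1}"
  have "((\<lambda>y. if y \<in> ?S then (1 - y\<^sup>2)^3 else 0) has_derivative
      (if y \<in> ?S then (\<lambda>h. (-6 * y * (1 - y\<^sup>2)^2) * h) else (\<lambda>h. 0 * h))) (at y within (?S \<union> ?T))"
  proof (rule has_derivative_If_within_closures)
    show "((\<lambda>y. (1 - y\<^sup>2)^3) has_derivative (\<lambda>h. (-6 * x * (1 - x\<^sup>2)^2) * h)) (at x within ?S \<union> (closure ?S \<inter> closure ?T))" for x
      apply (rule has_derivative_at_withinI)
      unfolding has_field_derivative_def[symmetric]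
      by (auto intro!: derivative_eq_intros simp: algebra_simps power2_eq_square)
    show "((\<lambda>y. 0) has_derivative (\<lambda>h. 0 * h)) (at x within ?T \<union> (closure ?S \<inter> closure ?T))" for x
      by (auto intro!: derivative_eq_intros)
    show "x \<in> closure ?S \<Longrightarrow> x \<in> closure ?T \<Longrightarrow> (1 - x\<^sup>2)^3 = 0" for x
      unfolding closure_lt1 closure_ge1 by auto
    show "x \<in> closure ?S \<Longrightarrow> x \<in> closure ?T \<Longrightarrow> (\<lambda>h. (-6 * x * (1 - x\<^sup>2)^2) * h) = (\<lambda>h. 0 * h)" for x
      unfolding closure_lt1 closure_ge1 by auto
  qed auto
  moreover have "?S \<union> ?T = UNIV" by auto
  moreover have "(if y \<in> ?S then (\<lambda>h. (-6 * y * (1 - y\<^sup>2)^2) * h) else (\<lambda>h. 0 * h)) = (*) (psi1 y)"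
    by (auto simp: psi1_if fun_eq_iff)
  ultimately show ?thesis
    unfolding has_field_derivative_def by (simp only: psi_if[symmetric])
qed

lemma psi1_deriv: "(psi1 has_real_derivative psi2 y) (at y)"
proof -
  let ?S = "{y::real. y\<^sup>2 < 1}" and ?T = "{y::real. \<not> y\<^sup>2 < 1}"
  have "((\<lambda>y. if y \<in> ?S then -6 * y * (1 - y\<^sup>2)^2 else 0) has_derivative
      (if y \<in> ?S then (\<lambda>h. ((1 - y\<^sup>2) * (30 * y\<^sup>2 - 6)) * h) else (\<lambda>h. 0 * h))) (at y within (?S \<union> ?T))"
  proof (rule has_derivative_If_within_closures)
    show "((\<lambda>y. -6 * y * (1 - y\<^sup>2)^2) has_derivative (\<lambda>h. ((1 - x\<^sup>2) * (30 * x\<^sup>2 - 6)) * h)) (at x within ?S \<union> (closure ?S \<inter> closure ?T))" for x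
      apply (rule has_derivative_at_withinI)
      unfolding has_field_derivative_def[symmetric]
      by (auto intro!: derivative_eq_intros simp: algebra_simps power2_eq_square)
    show "((\<lambda>y. 0) has_derivative (\<lambda>h. 0 * h)) (at x within ?T \<union> (closure ?S \<inter> closure ?T))" for x
      by (auto intro!: derivative_eq_intros)
    show "x \<in> closure ?S \<Longrightarrow> x \<in> closure ?T \<Longrightarrow> -6 * x * (1 - x\<^sup>2)^2 = 0" for x
      unfolding closure_lt1 closure_ge1 by auto
    show "x \<in> closure ?S \<Longrightarrow> x \<in> closure ?T \<Longrightarrow> (\<lambda>h. ((1 - x\<^sup>2) * (30 * x\<^sup>2 - 6)) * h) = (\<lambda>h. 0 * h)" for x
      unfolding closure_lt1 closure_ge1 by auto
  qed auto
  moreover have "?S \<union> ?T = UNIV" by auto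
  moreover have "(if y \<in> ?S then (\<lambda>h. ((1 - y\<^sup>2) * (30 * y\<^sup>2 - 6)) * h) else (\<lambda>h. 0 * h)) = (*) (psi2 y)"
    by (auto simp: psi2_def max_def fun_eq_iff)
  ultimately show ?thesis
    unfolding has_field_derivative_def by (simp only: psi1_if[symmetric])
qed

lemma psi_nonneg: "psi y \<ge> 0" by (simp add: psi_def)
lemma psi_le1: "psi y \<le> 1"
  unfolding psi_def by (rule power_le_one) (auto simp: max_def)
lemma psi_ge: "\<bar>y\<bar> \<le> 1/2 \<Longrightarrow> psi y \<ge> 27/64"
proof -
  assume a: "\<bar>y\<bar> \<le> 1/2"
  have "y\<^sup>2 \<le> (1/2)\<^sup>2" using power_mono[OF a, of 2] by simp
  then have "3/4 \<le> max 0 (1 - y\<^sup>2)" by (simp add: power2_eq_square)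
  then have "(3/4::real)^3 \<le> (max 0 (1 - y\<^sup>2))^3" by (rule power_mono) simp
  then show ?thesis by (simp add: psi_def power3_eq_cube)
qed

lemma psi2_ge: "psi2 y \<ge> -10 * psi y"
proof (cases "y\<^sup>2 < 1")
  case True
  have "0 \<le> (1 - y\<^sup>2) * (4 + 10 * y\<^sup>2 + 10 * y\<^sup>2 * y\<^sup>2)"
    using True by (intro mult_nonneg_nonneg) auto
  then show ?thesis using True
    by (simp add: psi2_def psi_def max_def algebra_simps power2_eq_square power3_eq_cube)
next
  case False
  then show ?thesis by (simp add: psi2_def psi_def max_def)
qed

lemma sq_ge1: "1 \<le> \<bar>y::real\<bar> \<Longrightarrow> 1 \<le> y\<^sup>2"
  by (metis abs_le_square_iff abs_one power_one)
lemma psi_zero: "1 \<le> \<bar>y\<bar> \<Longrightarrow> psi y = 0"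
  by (drule sq_ge1) (simp add: psi_def max_def)
lemma psi1_zero: "1 \<le> \<bar>y\<bar> \<Longrightarrow> psi1 y = 0"
  by (drule sq_ge1) (simp add: psi1_def max_def)
lemma psi2_zero: "1 \<le> \<bar>y\<bar> \<Longrightarrow> psi2 y = 0"
  by (drule sq_ge1) (simp add: psi2_def max_def)

lemma cont_psi: "continuous_on UNIV psi" "continuous_on UNIV psi1" "continuous_on UNIV psi2"
  unfolding psi_def psi1_def psi2_def by (auto intro!: continuous_intros)

lemma tangent_powr:
  fixes p x m :: real
  assumes "p \<ge> 1" "x > 0" "m > 0"
  shows "x powr p \<ge> m powr p + p * m powr (p - 1) * (x - m)"
proof -
  have "x powr p - m powr p \<ge> (p * m powr (p - 1)) * (x - m)"
  proof (rule convex_on_imp_above_tangent[OF powr_convex[OF assms(1)]])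
    show "connected {0::real<..}" by simp
    show "m \<in> interior {0<..}" using assms by (simp add: interior_open)
    show "x \<in> {0<..}" using assms by simp
    show "((\<lambda>x. x powr p) has_real_derivative p * m powr (p - 1)) (at m within {0<..})"
      using assms by (auto intro!: derivative_eq_intros)
  qed
  then show ?thesis by simp
qed


definition phi :: "real \<Rightarrow> real^'n \<Rightarrow> real" where
  "phi R x = (\<Prod>i\<in>UNIV. psi (x$i / R))"
definition phi1 :: "real \<Rightarrow> 'n \<Rightarrow> real^'n \<Rightarrow> real" where
  "phi1 R k x = psi1 (x$k / R) / R * (\<Prod>i\<in>UNIV-{k}. psi (x$i / R))"
definition phi2 :: "real \<Rightarrow> 'n \<Rightarrow> real^'n \<Rightarrow> real" where
  "phi2 R k x = psi2 (x$k / R) / R^2 * (\<Prod>i\<in>UNIV-{k}. psi (x$i / R))"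

lemma phi_split: "phi R x = psi (x$k / R) * (\<Prod>i\<in>UNIV-{k}. psi (x$i / R))"
  unfolding phi_def by (simp add: prod.remove)

lemma shift_nth: "(x + s *\<^sub>R axis k 1)$i = x$i + (if i = k then s else 0)"
  by (simp add: axis_def)

lemma prod_shift: "(\<Prod>i\<in>UNIV-{k}. psi ((x + s *\<^sub>R axis k 1)$i / R)) = (\<Prod>i\<in>UNIV-{k}. psi (x$i / R))"
  by (rule prod.cong) (auto simp: axis_def)

lemma psi_comp_deriv:
  assumes "R > 0"
  shows   "((\<lambda>s. psi ((a + s) / R)) has_real_derivative psi1 ((a + s0) / R) / R) (at s0)"
proof -
  have "((\<lambda>s. (a + s) / R) has_real_derivative 1 / R) (at s0)"
    using assms by (auto intro!: derivative_eq_intros)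
  from DERIV_chain2[OF psi_deriv this] show ?thesis by simp
qed

lemma psi1_comp_deriv:
  assumes "R > 0"
  shows   "((\<lambda>s. psi1 ((a + s) / R) / R) has_real_derivative psi2 ((a + s0) / R) / R^2) (at s0)"
proof -
  have "((\<lambda>s. (a + s) / R) has_real_derivative 1 / R) (at s0)"
    using assms by (auto intro!: derivative_eq_intros)
  from DERIV_cdivide[OF DERIV_chain2[OF psi1_deriv this], of R] show ?thesis by (simp add: power2_eq_square)
qed

lemma phi_deriv:
  assumes "R > 0"
  shows   "((\<lambda>s. phi R (x + s *\<^sub>R axis k 1)) has_real_derivative phi1 R k (x + s0 *\<^sub>R axis k 1)) (at s0)"
proof -
  have "((\<lambda>s. psi ((x$k + s) / R) * (\<Prod>i\<in>UNIV-{k}. psi (x$i / R))) has_real_derivative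
     psi1 ((x$k + s0) / R) / R * (\<Prod>i\<in>UNIV-{k}. psi (x$i / R))) (at s0)"
    by (rule DERIV_cmult_right[OF psi_comp_deriv[OF assms]])
  moreover have "phi R (x + s *\<^sub>R axis k 1) = psi ((x$k + s) / R) * (\<Prod>i\<in>UNIV-{k}. psi (x$i / R))" for s
    by (subst phi_split[of R _ k], subst prod_shift) (simp add: axis_def)
  moreover have "phi1 R k (x + s *\<^sub>R axis k 1) = psi1 ((x$k + s) / R) / R * (\<Prod>i\<in>UNIV-{k}. psi (x$i / R))" for s
    by (unfold phi1_def, subst prod_shift) (simp add: axis_def)
  ultimately show ?thesis by simp
qed

lemma phi1_deriv:
  assumes "R > 0"
  shows   "((\<lambda>s. phi1 R k (x + s *\<^sub>R axis k 1)) has_real_derivative phi2 R k (x + s0 *\<^sub>R axis k 1)) (at s0)"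
proof -
  have "((\<lambda>s. psi1 ((x$k + s) / R) / R * (\<Prod>i\<in>UNIV-{k}. psi (x$i / R))) has_real_derivative
     psi2 ((x$k + s0) / R) / R^2 * (\<Prod>i\<in>UNIV-{k}. psi (x$i / R))) (at s0)"
    by (rule DERIV_cmult_right[OF psi1_comp_deriv[OF assms]])
  moreover have "phi2 R k (x + s *\<^sub>R axis k 1) = psi2 ((x$k + s) / R) / R^2 * (\<Prod>i\<in>UNIV-{k}. psi (x$i / R))" for s
    by (unfold phi2_def, subst prod_shift) (simp add: axis_def)
  moreover have "phi1 R k (x + s *\<^sub>R axis k 1) = psi1 ((x$k + s) / R) / R * (\<Prod>i\<in>UNIV-{k}. psi (x$i / R))" for s
    by (unfold phi1_def, subst prod_shift) (simp add: axis_def)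
  ultimately show ?thesis by simp
qed

lemma cont_phi: assumes "R > 0" shows "continuous_on UNIV (phi R)" "continuous_on UNIV (phi1 R k)" "continuous_on UNIV (phi2 R k)"
  unfolding phi_def phi1_def phi2_def
  using assms by (auto simp del: continuous_on_const intro!: continuous_intros continuous_on_compose2[OF cont_psi(1)]
     continuous_on_compose2[OF cont_psi(2)] continuous_on_compose2[OF cont_psi(3)])

lemma phi_nonneg: "phi R x \<ge> 0"
  unfolding phi_def by (simp add: prod_nonneg psi_nonneg)
lemma phi_le1: "phi R x \<le> 1"
  unfolding phi_def by (simp add: prod_le_1 psi_nonneg psi_le1)

lemma phi_ge:
  fixes x :: "real^'n"
  assumes "R \<ge> 2" "\<forall>i. \<bar>x$i\<bar> \<le> 1"
  shows "phi R x \<ge> (27/64) ^ CARD('n)"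
proof -
  have "\<forall>i. 27/64 \<le> psi (x$i / R)"
  proof
    fix i :: 'n
    have "\<bar>x$i\<bar> \<le> 1" using assms by auto
    then have "\<bar>x$i\<bar> * 2 \<le> R" using assms(1) by linarith
    then have "\<bar>x$i / R\<bar> \<le> 1/2" using assms(1) by (simp add: abs_divide divide_simps)
    then show "27/64 \<le> psi (x$i / R)" using psi_ge by auto
  qed
  then have "(\<Prod>i\<in>(UNIV::'n set). (27/64::real)) \<le> (\<Prod>i\<in>UNIV. psi (x$i / R))"
    by (intro prod_mono) auto
  then show ?thesis by (simp add: phi_def)
qed

lemma phi2_sum_ge:
  fixes x :: "real^'n"
  assumes "R > 0"
  shows "(\<Sum>k\<in>UNIV. phi2 R k x) \<ge> - (10 * real CARD('n) / R^2) * phi R x"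
proof -
  have "phi2 R k x \<ge> - (10 / R^2) * phi R x" for k
  proof -
    have P: "(\<Prod>i\<in>UNIV-{k}. psi (x$i / R)) \<ge> 0" by (simp add: prod_nonneg psi_nonneg)
    have "psi2 (x$k / R) / R^2 \<ge> -10 * psi (x$k / R) / R^2"
      by (rule divide_right_mono) (use psi2_ge[of "x$k/R"] in auto)
    then have "psi2 (x$k / R) / R^2 * (\<Prod>i\<in>UNIV-{k}. psi (x$i / R)) \<ge> -10 * psi (x$k / R) / R^2 * (\<Prod>i\<in>UNIV-{k}. psi (x$i / R))"
      using P mult_right_mono by blast
    then show ?thesis unfolding phi2_def using phi_split[of R x k] by (simp add: algebra_simps)
  qed
  then have "(\<Sum>k\<in>UNIV. phi2 R k x) \<ge> (\<Sum>k\<in>(UNIV::'n set). - (10 / R^2) * phi R x)"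
    by (intro sum_mono) auto
  then show ?thesis by (simp add: algebra_simps)
qed

lemma outside_box: fixes x :: "real^'n" and R :: real shows "x \<notin> cbox (- (\<chi> i. R)) (\<chi> i. R) \<Longrightarrow> \<exists>i. R < \<bar>x$i\<bar>"
proof -
  assume "x \<notin> cbox (- (\<chi> i. R)) (\<chi> i. R)"
  then have "\<not> (\<forall>i. -R \<le> x$i \<and> x$i \<le> R)" by (simp add: mem_box_cart)
  then obtain i where "\<not> (-R \<le> x$i \<and> x$i \<le> R)" by blast
  then show ?thesis by (intro exI[of _ i]) auto
qed

lemma phi_zero_out:
  assumes "R > 0" "x \<notin> cbox (- (\<chi> i. R)) (\<chi> i. R)"
  shows "phi R x = 0" "phi1 R k x = 0" "phi2 R k x = 0"
proof -
  obtain i where i: "R < \<bar>x$i\<bar>" using outside_box assms by blast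
  then have z: "psi (x$i/R) = 0" "psi1 (x$i/R) = 0" "psi2 (x$i/R) = 0"
    using assms by (auto intro!: psi_zero psi1_zero psi2_zero simp: abs_divide)
  show "phi R x = 0" unfolding phi_def using z by (intro prod_zero) auto
  show "phi1 R k x = 0"
  proof (cases "i = k")
    case True then show ?thesis using z by (simp add: phi1_def)
  next
    case False
    then have "(\<Prod>i\<in>UNIV-{k}. psi (x$i / R)) = 0" using z by (intro prod_zero) auto
    then show ?thesis by (simp add: phi1_def)
  qed
  show "phi2 R k x = 0"
  proof (cases "i = k")
    case True then show ?thesis using z by (simp add: phi2_def)
  next
    case False
    then have "(\<Prod>i\<in>UNIV-{k}. psi (x$i / R)) = 0" using z by (intro prod_zero) auto
    then show ?thesis by (simp add: phi2_def)
  qed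
qed



lemma iter_DERIV:
  assumes "smooth_fun_on S g" "y + s0 *\<^sub>R v \<in> S"
  shows "((\<lambda>s. iter_dderiv vs g (y + s *\<^sub>R v)) has_real_derivative iter_dderiv (v#vs) g (y + s0 *\<^sub>R v)) (at s0)"
proof -
  define z where "z = y + s0 *\<^sub>R v"
  have "(\<lambda>s. iter_dderiv vs g (z + s *\<^sub>R v)) differentiable (at 0)"
    using assms unfolding smooth_fun_on_def z_def by blast
  then have "((\<lambda>s. iter_dderiv vs g (z + s *\<^sub>R v)) has_real_derivative iter_dderiv (v#vs) g z) (at 0)"
    by (simp add: DERIV_deriv_iff_real_differentiable)
  moreover have "(\<lambda>s. iter_dderiv vs g (y + (s + s0) *\<^sub>R v)) = (\<lambda>s. iter_dderiv vs g (z + s *\<^sub>R v))"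
    by (simp add: z_def algebra_simps scaleR_add_left)
  ultimately have "((\<lambda>s. iter_dderiv vs g (y + (s + s0) *\<^sub>R v)) has_real_derivative iter_dderiv (v#vs) g z) (at 0)"
    by simp
  then show ?thesis
    using DERIV_shift[of "\<lambda>s. iter_dderiv vs g (y + s *\<^sub>R v)" "iter_dderiv (v#vs) g z" 0 s0]
    by (simp add: z_def)
qed

definition G :: "(real^'n \<Rightarrow> real \<Rightarrow> real) \<Rightarrow> (real^'n) \<times> real \<Rightarrow> real" where
  "G f = (\<lambda>(x, t). f x t)"
definition ut :: "(real^'n \<Rightarrow> real \<Rightarrow> real) \<Rightarrow> real^'n \<Rightarrow> real \<Rightarrow> real" where
  "ut f x t = iter_dderiv [(0, 1)] (G f) (x, t)"
definition ux :: "(real^'n \<Rightarrow> real \<Rightarrow> real) \<Rightarrow> 'n \<Rightarrow> real^'n \<Rightarrow> real \<Rightarrow> real" where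
  "ux f k x t = iter_dderiv [(axis k 1, 0)] (G f) (x, t)"
definition uxx :: "(real^'n \<Rightarrow> real \<Rightarrow> real) \<Rightarrow> 'n \<Rightarrow> real^'n \<Rightarrow> real \<Rightarrow> real" where
  "uxx f k x t = iter_dderiv [(axis k 1, 0), (axis k 1, 0)] (G f) (x, t)"

abbreviation "SS \<equiv> (UNIV :: (real^'n) set) \<times> {0::real<..}"

lemma D_t:
  assumes "smooth_fun_on SS (G f)" "t > 0"
  shows "((\<lambda>s. f x s) has_real_derivative ut f x t) (at t)"
  using iter_DERIV[OF assms(1), of "(x, 0)" t "(0, 1)" "[]"] assms(2)
  by (simp add: G_def ut_def)

lemma D_x:
  assumes "smooth_fun_on SS (G f)" "t > 0"
  shows "((\<lambda>s. f (x + s *\<^sub>R axis k 1) t) has_real_derivative ux f k (x + s0 *\<^sub>R axis k 1) t) (at s0)"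
  using iter_DERIV[OF assms(1), of "(x, t)" s0 "(axis k 1, 0)" "[]"] assms(2)
  by (simp add: G_def ux_def)

lemma D_xx:
  assumes "smooth_fun_on SS (G f)" "t > 0"
  shows "((\<lambda>s. ux f k (x + s *\<^sub>R axis k 1) t) has_real_derivative uxx f k (x + s0 *\<^sub>R axis k 1) t) (at s0)"
  using iter_DERIV[OF assms(1), of "(x, t)" s0 "(axis k 1, 0)" "[(axis k 1, 0)]"] assms(2)
  by (simp add: G_def ux_def uxx_def)

lemma cont_iter:
  assumes "smooth_fun_on SS (G f)" "t > 0"
  shows "continuous_on UNIV (\<lambda>x. iter_dderiv vs (G f) (x, t))"
proof -
  have "continuous_on SS (iter_dderiv vs (G f))" using assms unfolding smooth_fun_on_def by blast
  then show ?thesis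
    by (rule continuous_on_compose2) (use assms in \<open>auto intro!: continuous_intros\<close>)
qed

lemma cont_ux:
  assumes "smooth_fun_on SS (G f)" "t > 0"
  shows "continuous_on UNIV (\<lambda>x. ux f k x t)" "continuous_on UNIV (\<lambda>x. uxx f k x t)"
  unfolding ux_def uxx_def by (rule cont_iter[OF assms])+

lemma cont_ut:
  assumes "smooth_fun_on SS (G f)"
  shows "continuous_on SS (\<lambda>(x, t). ut f x t)"
proof -
  have "continuous_on SS (iter_dderiv [(0,1)] (G f))" using assms unfolding smooth_fun_on_def by blast
  then show ?thesis unfolding ut_def by (simp only: case_prod_eta)
qed

lemma lap_eq:
  assumes "smooth_fun_on SS (G f)" "t > 0"
  shows "laplacian (\<lambda>y. f y t) x = (\<Sum>k\<in>UNIV. uxx f k x t)"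
  unfolding laplacian_def
proof (rule sum.cong[OF refl])
  fix k
  have "deriv (\<lambda>s. f (x + s *\<^sub>R axis k 1) t) = (\<lambda>s. ux f k (x + s *\<^sub>R axis k 1) t)"
    by (rule ext, rule DERIV_imp_deriv, rule D_x[OF assms])
  then show "deriv (deriv (\<lambda>s. f (x + s *\<^sub>R axis k 1) t)) 0 = uxx f k x t"
    using DERIV_imp_deriv[OF D_xx[OF assms, of k x 0]] by simp
qed



abbreviation BB :: "real \<Rightarrow> (real^'n) set" where
  "BB R \<equiv> cbox (- (\<chi> i. 2 * R)) (\<chi> i. 2 * R)"
abbreviation KK :: "real \<Rightarrow> (real^'n) set" where
  "KK R \<equiv> cbox (- (\<chi> i. R)) (\<chi> i. R)"

lemma KK_sub:
  fixes s :: real and k :: "'n::finite"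
  assumes "R \<ge> 1" "\<bar>s\<bar> < 1"
  shows "KK R \<subseteq> cbox (- (\<chi> i. 2 * R) + s *\<^sub>R axis k 1) ((\<chi> i. 2 * R) + s *\<^sub>R axis k 1)"
  using assms by (auto simp: mem_box_cart axis_def abs_less_iff) (smt (verit))+

lemma ibp_zero:
  fixes f :: "real^'n \<Rightarrow> real \<Rightarrow> real"
  assumes sm: "smooth_fun_on SS (G f)" and cf: "continuous_on UNIV (\<lambda>x. f x t)"
    and t: "t > 0" and R: "R \<ge> 2"
  shows "integral (BB R) (\<lambda>x. phi R x * uxx f k x t) = integral (BB R) (\<lambda>x. f x t * phi2 R k x)"
proof -
  have R0: "R > 0" using R by simp
  define e :: "real^'n" where "e = axis k 1"
  define W where "W x = phi R x * ux f k x t - f x t * phi1 R k x" for x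
  define dW where "dW x = phi R x * uxx f k x t - f x t * phi2 R k x" for x
  have cW: "continuous_on UNIV W" unfolding W_def
    by (intro continuous_intros cont_phi[OF R0] cont_ux[OF sm t] cf)
  have cdW: "continuous_on UNIV dW" unfolding dW_def
    by (intro continuous_intros cont_phi[OF R0] cont_ux[OF sm t] cf)
  have dd: "((\<lambda>s. W (x + s *\<^sub>R e)) has_real_derivative dW (x + s0 *\<^sub>R e)) (at s0)" for x s0
  proof -
    have "((\<lambda>s. phi R (x + s *\<^sub>R e) * ux f k (x + s *\<^sub>R e) t - f (x + s *\<^sub>R e) t * phi1 R k (x + s *\<^sub>R e))
      has_real_derivative
       (phi1 R k (x + s0 *\<^sub>R e) * ux f k (x + s0 *\<^sub>R e) t + uxx f k (x + s0 *\<^sub>R e) t * phi R (x + s0 *\<^sub>R e))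
     - (ux f k (x + s0 *\<^sub>R e) t * phi1 R k (x + s0 *\<^sub>R e) + phi2 R k (x + s0 *\<^sub>R e) * f (x + s0 *\<^sub>R e) t)) (at s0)"
      unfolding e_def
      by (intro DERIV_diff DERIV_mult phi_deriv[OF R0] phi1_deriv[OF R0] D_x[OF sm t] D_xx[OF sm t])
    then show ?thesis unfolding W_def dW_def by (simp add: algebra_simps)
  qed
  define U where "U = {-1<..<(1::real)}"
  have U: "0 \<in> U" "open U" "convex U" by (auto simp: U_def)
  have Wout: "W x = 0" if "x \<notin> KK R" for x
    unfolding W_def using phi_zero_out[OF R0 that] by simp
  have IK: "(W has_integral integral (KK R) W) (KK R)"
    by (rule integrable_integral, rule integrable_continuous, rule continuous_on_subset[OF cW]) auto
  have const: "integral (BB R) (\<lambda>x. W (x + s *\<^sub>R e)) = integral (KK R) W" if "s \<in> U" for s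
  proof -
    have "(W has_integral integral (KK R) W) (cbox (- (\<chi> i. 2 * R) + s *\<^sub>R e) ((\<chi> i. 2 * R) + s *\<^sub>R e))"
    proof (rule has_integral_on_superset[OF IK Wout])
      have "\<bar>s\<bar> < 1" using that by (auto simp: U_def)
      then show "KK R \<subseteq> cbox (- (\<chi> i. 2 * R) + s *\<^sub>R e) ((\<chi> i. 2 * R) + s *\<^sub>R e)"
        unfolding e_def by (intro KK_sub) (use R in auto)
    qed auto
    then have "((W \<circ> (+) (s *\<^sub>R e)) has_integral integral (KK R) W) (BB R)"
      by (simp add: has_integral_shift_cbox_iff)
    moreover have "(W \<circ> (+) (s *\<^sub>R e)) = (\<lambda>x. W (x + s *\<^sub>R e))" by (auto simp: add.commute)
    ultimately show ?thesis by (simp add: integral_unique)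
  qed
  have "((\<lambda>s. integral (BB R) (\<lambda>x. W (x + s *\<^sub>R e))) has_field_derivative integral (BB R) (\<lambda>x. dW (x + 0 *\<^sub>R e))) (at 0 within U)"
  proof (rule leibniz_rule_field_derivative)
    show "((\<lambda>s. W (x + s *\<^sub>R e)) has_field_derivative dW (x + s *\<^sub>R e)) (at s within U)" for s x
      by (rule has_field_derivative_at_within[OF dd])
    show "(\<lambda>x. W (x + s *\<^sub>R e)) integrable_on BB R" for s
      by (rule integrable_continuous, rule continuous_on_compose2[OF cW]) (auto intro!: continuous_intros)
    show "continuous_on (U \<times> BB R) (\<lambda>(s, x). dW (x + s *\<^sub>R e))"
    proof -
      have "continuous_on (U \<times> BB R) (\<lambda>p. dW (snd p + fst p *\<^sub>R e))"
        by (rule continuous_on_compose2[OF cdW]) (auto intro!: continuous_intros)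
      then show ?thesis by (simp add: case_prod_beta')
    qed
  qed (use U in auto)
  then have "((\<lambda>s. integral (BB R) (\<lambda>x. W (x + s *\<^sub>R e))) has_field_derivative integral (BB R) dW) (at 0)"
    using at_within_open[OF U(1,2)] by simp
  then have "((\<lambda>s. integral (KK R) W) has_field_derivative integral (BB R) dW) (at 0)"
    by (rule has_field_derivative_transform_within_open[OF _ U(2) U(1)]) (use const in auto)
  then have z: "integral (BB R) dW = 0"
    using DERIV_unique DERIV_const by blast
  have i1: "(\<lambda>x. phi R x * uxx f k x t) integrable_on BB R"
    by (rule integrable_continuous, rule continuous_on_subset[of UNIV])
       (auto intro!: continuous_intros cont_phi[OF R0] cont_ux[OF sm t])
  have i2: "(\<lambda>x. f x t * phi2 R k x) integrable_on BB R"
    by (rule integrable_continuous, rule continuous_on_subset[of UNIV])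
       (auto intro!: continuous_intros cont_phi[OF R0] cf)
  have "integral (BB R) dW = integral (BB R) (\<lambda>x. phi R x * uxx f k x t) - integral (BB R) (\<lambda>x. f x t * phi2 R k x)"
    unfolding dW_def by (rule integral_diff[OF i1 i2])
  then show ?thesis using z by simp
qed



lemma ode_blowup:
  fixes F F' :: "real \<Rightarrow> real" and p lam t1 :: real
  assumes der: "\<And>t. t \<ge> t1 \<Longrightarrow> (F has_real_derivative F' t) (at t)"
    and pos: "\<And>t. t \<ge> t1 \<Longrightarrow> F t > 0"
    and ineq: "\<And>t. t \<ge> t1 \<Longrightarrow> F' t \<ge> - lam * F t + F t powr p"
    and p: "p > 1" and lam: "lam > 0"
    and start: "F t1 powr (p - 1) > lam"
  shows False
proof -
  define H where "H t = (F t powr (1 - p) - 1 / lam) * exp (- (p - 1) * lam * t)" for t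
  have dH: "(H has_real_derivative
      ((1 - p) * F t powr (1 - p - 1) * F' t * exp (- (p - 1) * lam * t)
       + (F t powr (1 - p) - 1 / lam) * (exp (- (p - 1) * lam * t) * (- (p - 1) * lam)))) (at t)"
    if "t \<ge> t1" for t
    unfolding H_def using der[OF that] pos[OF that]
    by (auto intro!: derivative_eq_intros)
  have dHle: "(1 - p) * F t powr (1 - p - 1) * F' t * exp (- (p - 1) * lam * t)
       + (F t powr (1 - p) - 1 / lam) * (exp (- (p - 1) * lam * t) * (- (p - 1) * lam)) \<le> 0"
    if "t \<ge> t1" for t
  proof -
    let ?E = "exp (- (p - 1) * lam * t)"
    have Fp: "F t > 0" using pos[OF that] .
    have a: "F t powr (- p) * F' t \<ge> F t powr (- p) * (- lam * F t + F t powr p)"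
      using ineq[OF that] Fp by (intro mult_left_mono) auto
    have b: "F t powr (- p) * (- lam * F t + F t powr p) = - lam * F t powr (1 - p) + 1"
    proof -
      have e1: "F t powr (- p) * F t = F t powr (1 - p)"
        using Fp powr_add[of "F t" "- p" 1] by simp
      have e2: "F t powr (- p) * F t powr p = 1"
        using Fp powr_add[of "F t" "- p" p] by simp
      have "F t powr (- p) * (- lam * F t + F t powr p) = - lam * (F t powr (- p) * F t) + F t powr (- p) * F t powr p"
        by (simp add: algebra_simps)
      also have "\<dots> = - lam * F t powr (1 - p) + 1" by (simp only: e1 e2)
      finally show ?thesis .
    qed
    have "(1 - p) * F t powr (1 - p - 1) * F' t * ?E
       + (F t powr (1 - p) - 1 / lam) * (?E * (- (p - 1) * lam))
       = (p - 1) * ?E * (- (F t powr (- p) * F' t) - lam * F t powr (1 - p) + 1)"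
      using lam by (simp add: algebra_simps)
    also have "\<dots> \<le> 0"
      using a b p by (intro mult_nonneg_nonpos) auto
    finally show ?thesis .
  qed
  have Hdec: "H T \<le> H t1" if "T \<ge> t1" for T
    by (rule DERIV_nonpos_imp_nonincreasing[OF that]) (use dH dHle in auto)
  have H1: "H t1 < 0"
  proof -
    have "F t1 powr (1 - p) = inverse (F t1 powr (p - 1))"
      using pos[of t1] by (simp add: powr_minus[symmetric])
    also have "\<dots> < 1 / lam" using start lam by (simp add: inverse_eq_divide frac_less2)
    finally show ?thesis unfolding H_def by (simp add: mult_neg_pos)
  qed
  define h where "h = - H t1"
  have h: "h > 0" using H1 by (simp add: h_def)
  define c where "c = (1 / lam) / h / ((p - 1) * lam)"
  have c: "(p - 1) * lam * c = (1 / lam) / h" using p lam h by (simp add: c_def)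
  define T where "T = max t1 (max 0 c)"
  have T: "T \<ge> t1" "T \<ge> c" by (auto simp: T_def)
  have T3: "(p - 1) * lam * T \<ge> (1 / lam) / h"
    using mult_left_mono[OF T(2), of "(p - 1) * lam"] p lam c by auto
  have "F T powr (1 - p) - 1 / lam = H T * exp ((p - 1) * lam * T)"
  proof -
    have "exp (- (p - 1) * lam * T) * exp ((p - 1) * lam * T) = 1"
    proof -
      have z: "- (p - 1) * lam * T + (p - 1) * lam * T = 0" by (simp add: algebra_simps)
      show ?thesis using exp_add[of "- (p - 1) * lam * T" "(p - 1) * lam * T"] unfolding z by simp
    qed
    then show ?thesis unfolding H_def by (metis mult.assoc mult.right_neutral)
  qed
  also have "\<dots> \<le> H t1 * exp ((p - 1) * lam * T)"
    using Hdec[OF T(1)] by (intro mult_right_mono) auto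
  also have "\<dots> \<le> H t1 * (1 + (p - 1) * lam * T)"
    using H1 exp_ge_add_one_self[of "(p - 1) * lam * T"] by (intro mult_left_mono_neg) auto
  also have "\<dots> = - h - h * ((p - 1) * lam * T)" by (simp add: h_def algebra_simps)
  also have "\<dots> \<le> - h - h * ((1 / lam) / h)"
    using T3 h by (intro diff_left_mono mult_left_mono) auto
  also have "\<dots> < - 1 / lam" using h by simp
  finally have "F T powr (1 - p) < 0" by simp
  then show False by simp
qed



abbreviation S1 :: "(real^'n) set" where "S1 \<equiv> cbox (- (\<chi> i. 1)) (\<chi> i. 1)"

lemma content_S1: "measure lborel (S1::(real^'n) set) = 2 ^ CARD('n)"
proof -
  have "(0::real^'n) \<in> S1" by (simp add: mem_box_cart)
  then have "(S1::(real^'n) set) \<noteq> {}" by blast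
  then show ?thesis by (simp add: content_cbox_cart)
qed

lemma box_lower:
  fixes h :: "real^'n \<Rightarrow> real"
  assumes ch: "continuous_on UNIV h" and nn: "\<And>x. h x \<ge> 0"
    and lo: "\<And>x. x \<in> S1 \<Longrightarrow> h x \<ge> c" and R: "R \<ge> 2"
  shows "integral (BB R) h \<ge> c * 2 ^ CARD('n)"
proof -
  have sub: "(S1::(real^'n) set) \<subseteq> BB R" using R by (auto simp: mem_box_cart) (smt (verit))+
  have "c * 2 ^ CARD('n) = integral (S1::(real^'n) set) (\<lambda>x. c)" by (simp add: content_S1)
  also have "\<dots> \<le> integral S1 h"
    by (rule integral_le) (auto intro!: integrable_continuous continuous_on_subset[OF ch] lo)
  also have "\<dots> \<le> integral (BB R) h"
    by (rule integral_subset_le[OF sub]) (auto intro!: integrable_continuous continuous_on_subset[OF ch] nn)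
  finally show ?thesis .
qed

lemma box_upper:
  fixes h :: "real^'n \<Rightarrow> real"
  assumes ch: "continuous_on UNIV h" and le: "\<And>x. h x \<le> 1" and R: "R \<ge> 2"
  shows "integral (BB R) h \<le> (4 * R) ^ CARD('n)"
proof -
  have "integral (BB R) h \<le> integral (BB R) (\<lambda>x::real^'n. 1)"
    by (rule integral_le) (auto intro!: integrable_continuous continuous_on_subset[OF ch] le)
  also have "\<dots> = measure lborel (BB R :: (real^'n) set)" by simp
  also have "\<dots> = (4 * R) ^ CARD('n)"
  proof -
    have "(0::real^'n) \<in> BB R" using R by (simp add: mem_box_cart)
    then have "(BB R :: (real^'n) set) \<noteq> {}" by blast
    then show ?thesis by (simp add: content_cbox_cart)
  qed
  finally show ?thesis .
qed



lemma deriv_ineq: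
  fixes f :: "real^'n \<Rightarrow> real \<Rightarrow> real"
  assumes sm: "smooth_fun_on SS (G f)" and cf: "continuous_on UNIV (\<lambda>x. f x t)"
    and pos: "\<And>x. f x t > 0"
    and pde: "\<And>x. deriv (\<lambda>s. f x s) t = laplacian (\<lambda>y. f y t) x + f x t powr p"
    and t: "t > 0" and R: "R \<ge> 2" and p: "p > 1"
    and Zp: "integral (BB R) (phi R :: real^'n \<Rightarrow> real) > 0" and Ip: "integral (BB R) (\<lambda>x. phi R x * f x t) > 0"
  shows "integral (BB R) (\<lambda>x. phi R x * ut f x t) \<ge>
     - (10 * real CARD('n) / R^2) * integral (BB R) (\<lambda>x. phi R x * f x t)
     + integral (BB R) (phi R :: real^'n \<Rightarrow> real) * (integral (BB R) (\<lambda>x. phi R x * f x t) / integral (BB R) (phi R :: real^'n \<Rightarrow> real)) powr p"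
proof -
  have R0: "R > 0" using R by simp
  define B :: "(real^'n) set" where "B = BB R"
  define Z where "Z = integral B (phi R)"
  define I where "I = integral B (\<lambda>x. phi R x * f x t)"
  define lam where "lam = 10 * real CARD('n) / R^2"
  note cphi = cont_phi[OF R0]
  note cux = cont_ux[OF sm t]
  have cfp: "continuous_on UNIV (\<lambda>x. f x t powr p)"
    using pos by (intro continuous_on_powr cf continuous_on_const) (auto simp: less_imp_neq[symmetric])
  have intg: "g integrable_on B" if "continuous_on UNIV g" for g :: "real^'n \<Rightarrow> real"
    unfolding B_def by (rule integrable_continuous, rule continuous_on_subset[OF that]) auto
  have ut_eq: "ut f x t = (\<Sum>k\<in>UNIV. uxx f k x t) + f x t powr p" for x
    using pde[of x] DERIV_imp_deriv[OF D_t[OF sm t, of x]] lap_eq[OF sm t, of x] by simp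
  have "integral B (\<lambda>x. phi R x * ut f x t)
      = integral B (\<lambda>x. (\<Sum>k\<in>UNIV. phi R x * uxx f k x t) + phi R x * f x t powr p)"
    by (rule integral_cong) (simp add: ut_eq algebra_simps sum_distrib_left)
  also have "\<dots> = integral B (\<lambda>x. \<Sum>k\<in>UNIV. phi R x * uxx f k x t) + integral B (\<lambda>x. phi R x * f x t powr p)"
    by (rule integral_add; rule intg) (intro continuous_intros cphi cux cfp)+
  also have "integral B (\<lambda>x. \<Sum>k\<in>UNIV. phi R x * uxx f k x t) = (\<Sum>k\<in>UNIV. integral B (\<lambda>x. phi R x * uxx f k x t))"
    by (rule integral_sum) (auto intro!: intg continuous_intros cphi cux)
  also have "\<dots> = (\<Sum>k\<in>UNIV. integral B (\<lambda>x. f x t * phi2 R k x))"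
    unfolding B_def by (rule sum.cong[OF refl], rule ibp_zero[OF sm cf t R])
  also have "\<dots> = integral B (\<lambda>x. \<Sum>k\<in>UNIV. f x t * phi2 R k x)"
    by (rule integral_sum[symmetric]) (auto intro!: intg continuous_intros cphi cf)
  finally have eq: "integral B (\<lambda>x. phi R x * ut f x t) =
     integral B (\<lambda>x. \<Sum>k\<in>UNIV. f x t * phi2 R k x) + integral B (\<lambda>x. phi R x * f x t powr p)" .
  have "integral B (\<lambda>x. \<Sum>k\<in>UNIV. f x t * phi2 R k x) \<ge> integral B (\<lambda>x. - lam * (phi R x * f x t))"
  proof (rule integral_le)
    show "(\<lambda>x. - lam * (phi R x * f x t)) integrable_on B"
      by (rule intg) (intro continuous_intros cphi cf)
    show "(\<lambda>x. \<Sum>k\<in>UNIV. f x t * phi2 R k x) integrable_on B"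
      by (rule intg) (intro continuous_intros cphi cf)
    fix x
    have "f x t * (\<Sum>k\<in>UNIV. phi2 R k x) \<ge> f x t * (- lam * phi R x)"
      unfolding lam_def using phi2_sum_ge[OF R0, of x] pos[of x] by (intro mult_left_mono) auto
    then show "- lam * (phi R x * f x t) \<le> (\<Sum>k\<in>UNIV. f x t * phi2 R k x)"
      by (simp add: sum_distrib_left algebra_simps)
  qed
  also have "integral B (\<lambda>x. - lam * (phi R x * f x t)) = - lam * I" by (simp add: I_def)
  finally have A: "integral B (\<lambda>x. \<Sum>k\<in>UNIV. f x t * phi2 R k x) \<ge> - lam * I" .
  define m where "m = I / Z"
  have m: "m > 0" unfolding m_def I_def Z_def B_def using Zp Ip by simp
  define a where "a = m powr p - p * m powr (p - 1) * m"
  define b where "b = p * m powr (p - 1)"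
  have "integral B (\<lambda>x. phi R x * f x t powr p) \<ge> integral B (\<lambda>x. a * phi R x + b * (phi R x * f x t))"
  proof (rule integral_le)
    show "(\<lambda>x. a * phi R x + b * (phi R x * f x t)) integrable_on B"
      by (rule intg) (intro continuous_intros cphi cf)
    show "(\<lambda>x. phi R x * f x t powr p) integrable_on B"
      by (rule intg) (intro continuous_intros cphi cfp)
    fix x
    have "f x t powr p \<ge> m powr p + p * m powr (p - 1) * (f x t - m)"
      using tangent_powr[of p "f x t" m] p pos[of x] m by simp
    then have "phi R x * f x t powr p \<ge> phi R x * (m powr p + p * m powr (p - 1) * (f x t - m))"
      using phi_nonneg by (intro mult_left_mono) auto
    then show "a * phi R x + b * (phi R x * f x t) \<le> phi R x * f x t powr p"
      by (simp add: a_def b_def algebra_simps)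
  qed
  also have "integral B (\<lambda>x. a * phi R x + b * (phi R x * f x t)) = a * Z + b * I"
    unfolding Z_def I_def
    by (subst integral_add) (auto intro!: intg continuous_intros cphi cf)
  also have "a * Z + b * I = Z * m powr p"
    using Zp unfolding a_def b_def m_def Z_def B_def by (simp add: algebra_simps)
  finally have J: "integral B (\<lambda>x. phi R x * f x t powr p) \<ge> Z * m powr p" .
  show ?thesis
    using eq A J unfolding B_def[symmetric] Z_def[symmetric] I_def[symmetric] lam_def[symmetric] m_def
    by simp
qed



lemma I_deriv:
  fixes f :: "real^'n \<Rightarrow> real \<Rightarrow> real"
  assumes sm: "smooth_fun_on SS (G f)"
    and cf: "\<And>s. s > 0 \<Longrightarrow> continuous_on UNIV (\<lambda>x. f x s)"
    and t: "t > 0" and R: "R \<ge> 2"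
  shows "((\<lambda>s. integral (BB R) (\<lambda>x. phi R x * f x s)) has_real_derivative
            integral (BB R) (\<lambda>x. phi R x * ut f x t)) (at t)"
proof -
  have R0: "R > 0" using R by simp
  define U where "U = {0::real<..}"
  have "((\<lambda>s. integral (BB R) (\<lambda>x. phi R x * f x s)) has_field_derivative
            integral (BB R) (\<lambda>x. phi R x * ut f x t)) (at t within U)"
  proof (rule leibniz_rule_field_derivative)
    show "((\<lambda>s. phi R x * f x s) has_field_derivative phi R x * ut f x s) (at s within U)"
      if "s \<in> U" for s x
      by (rule has_field_derivative_at_within, rule DERIV_cmult, rule D_t[OF sm]) (use that in \<open>simp add: U_def\<close>)
    show "(\<lambda>x. phi R x * f x s) integrable_on BB R" if "s \<in> U" for s
      by (rule integrable_continuous, rule continuous_on_subset[of UNIV])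
         (use that in \<open>auto intro!: continuous_intros cont_phi[OF R0] cf simp: U_def\<close>)
    have c1: "continuous_on (U \<times> BB R) (\<lambda>p. (\<lambda>(x, t). ut f x t) (snd p, fst p))"
      by (rule continuous_on_compose2[OF cont_ut[OF sm]]) (auto intro!: continuous_intros simp: U_def)
    have c2: "continuous_on (U \<times> BB R) (\<lambda>p. phi R (snd p))"
      by (rule continuous_on_compose2[OF cont_phi(1)[OF R0]]) (auto intro!: continuous_intros)
    show "continuous_on (U \<times> BB R) (\<lambda>(s, x). phi R x * ut f x s)"
      using continuous_on_mult[OF c2 c1] by (simp add: case_prod_beta')
  qed (use t in \<open>auto simp: U_def\<close>)
  moreover have "at t within U = at t" using t by (intro at_within_open) (auto simp: U_def)
  ultimately show ?thesis by simp
qed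

lemma min_pos:
  fixes f :: "real^'n \<Rightarrow> real \<Rightarrow> real"
  assumes "continuous_on UNIV (\<lambda>x. f x t)" "\<And>x. f x t > 0"
  obtains mu where "mu > 0" "\<And>x. x \<in> S1 \<Longrightarrow> f x t \<ge> mu"
proof -
  have "(0::real^'n) \<in> S1" by (simp add: mem_box_cart)
  then have ne: "(S1::(real^'n) set) \<noteq> {}" by blast
  obtain x0 where "x0 \<in> S1" "\<forall>y\<in>S1. f x0 t \<le> f y t"
    using continuous_attains_inf[OF compact_cbox ne continuous_on_subset[OF assms(1)]] by auto
  then show ?thesis using that[of "f x0 t"] assms(2) by auto
qed

lemma I_lower:
  fixes f :: "real^'n \<Rightarrow> real \<Rightarrow> real"
  assumes cf: "continuous_on UNIV (\<lambda>x. f x t)" and pos: "\<And>x. f x t > 0"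
    and mu: "mu \<ge> 0" "\<And>x. x \<in> S1 \<Longrightarrow> f x t \<ge> mu" and R: "R \<ge> 2"
  shows "integral (BB R) (\<lambda>x. phi R x * f x t) \<ge> (27/64) ^ CARD('n) * mu * 2 ^ CARD('n)"
proof -
  have R0: "R > 0" using R by simp
  show ?thesis
  proof (rule box_lower[OF _ _ _ R])
    show "continuous_on UNIV (\<lambda>x. phi R x * f x t)" by (intro continuous_intros cont_phi[OF R0] cf)
    show "0 \<le> phi R x * f x t" for x using phi_nonneg[of R x] pos[of x] by simp
    show "(27/64) ^ CARD('n) * mu \<le> phi R x * f x t" if "x \<in> S1" for x
    proof (rule mult_mono)
      show "(27/64) ^ CARD('n) \<le> phi R x" using that R by (intro phi_ge) (auto simp: mem_box_cart abs_le_iff)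
    qed (use mu that phi_nonneg in auto)
  qed
qed



theorem mainTheorem5:
  fixes f :: "real^'n \<Rightarrow> real \<Rightarrow> real" and p c t0 :: real and x0 :: "real^'n"
  assumes "p > 1"
    and "0 < real CARD('n) * (p - 1)" and "real CARD('n) * (p - 1) \<le> c" and "c < 2"
    and "t0 \<ge> 0"
    and "f x0 t0 \<ge> (4 * real CARD('n) / (2 - c)) powr (1 / (p - 1))"
  shows "\<not> global_pos_solution p f"
proof
  assume gs: "global_pos_solution p f"
  have p: "p > 1" by fact
  define n where "n = real CARD('n)"
  have n1: "n \<ge> 1" by (simp add: n_def)
  define d where "d = 2 - n * (p - 1)"
  have d: "d > 0" using assms(3,4) by (simp add: d_def n_def)
  have sm: "smooth_fun_on SS (G f)" using gs by (simp add: global_pos_solution_def G_def)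
  have c2: "continuous_on (UNIV \<times> {0..}) (\<lambda>(x, t). f x t)" using gs by (simp add: global_pos_solution_def)
  have pos: "\<And>x t. t \<ge> 0 \<Longrightarrow> f x t > 0" using gs by (simp add: global_pos_solution_def)
  have pde: "\<And>x t. t > 0 \<Longrightarrow> deriv (\<lambda>s. f x s) t = laplacian (\<lambda>y. f y t) x + f x t powr p"
    using gs by (simp add: global_pos_solution_def)
  have cf: "continuous_on UNIV (\<lambda>x. f x t)" if "t \<ge> 0" for t
  proof -
    have "continuous_on UNIV (\<lambda>x. (\<lambda>(x, t). f x t) (x, t))"
      by (rule continuous_on_compose2[OF c2]) (use that in \<open>auto intro!: continuous_intros\<close>)
    then show ?thesis by simp
  qed
  have cf1: "continuous_on UNIV (\<lambda>x. f x 1)" by (rule cf) simp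
  have pos1: "\<And>x. f x 1 > 0" by (rule pos) simp
  obtain mu where mu: "mu > 0" "\<And>x. x \<in> S1 \<Longrightarrow> f x 1 \<ge> mu"
  proof -
    show ?thesis using min_pos[of f 1, OF cf1 pos1] that by blast
  qed
  define kap where "kap = mu * (27/128) ^ CARD('n)"
  have kap: "kap > 0" using mu by (simp add: kap_def)
  define X where "X = (10 * n + 1) / kap powr (p - 1)"
  have X: "X > 0" using kap n1 by (simp add: X_def)
  define R where "R = max 2 (X powr (1 / d))"
  have R: "R \<ge> 2" by (simp add: R_def)
  have R0: "R > 0" using R by simp
  have RX: "R powr d \<ge> X"
  proof -
    have "X = (X powr (1 / d)) powr d" using d X by (simp add: powr_powr)
    also have "\<dots> \<le> R powr d" using d by (intro powr_mono2) (auto simp: R_def)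
    finally show ?thesis .
  qed
  define lam where "lam = 10 * n / R^2"
  have lam: "lam > 0" using n1 R0 by (simp add: lam_def)
  define Z where "Z = integral (BB R) (phi R :: real^'n \<Rightarrow> real)"
  have Zlow: "Z \<ge> (27/64) ^ CARD('n) * 2 ^ CARD('n)"
    unfolding Z_def
    by (rule box_lower[OF cont_phi(1)[OF R0] phi_nonneg _ R], rule phi_ge[OF R]) (auto simp: mem_box_cart abs_le_iff)
  have Zp: "Z > 0" by (rule less_le_trans[OF _ Zlow]) simp
  have Zup: "Z \<le> (4 * R) ^ CARD('n)"
    unfolding Z_def by (rule box_upper[OF cont_phi(1)[OF R0] phi_le1 R])
  define I where "I t = integral (BB R) (\<lambda>x. phi R x * f x t)" for t
  define I' where "I' t = integral (BB R) (\<lambda>x. phi R x * ut f x t)" for t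
  have Ipos: "I t > 0" if "t \<ge> 1" for t
  proof -
    have t0: "t \<ge> 0" using that by simp
    obtain m where m: "m > 0" "\<And>x. x \<in> S1 \<Longrightarrow> f x t \<ge> m"
      using min_pos[of f t, OF cf[OF t0] pos[OF t0]] by auto
    have "I t \<ge> (27/64) ^ CARD('n) * m * 2 ^ CARD('n)"
      unfolding I_def using m by (intro I_lower[of f t, OF cf[OF t0] pos[OF t0] _ _ R]) auto
    moreover have "(27/64) ^ CARD('n) * m * 2 ^ CARD('n) > (0::real)" using m by simp
    ultimately show ?thesis by linarith
  qed
  define F where "F t = I t / Z" for t
  define F' where "F' t = I' t / Z" for t
  show False
  proof (rule ode_blowup[of 1 F F' lam p])
    fix t :: real assume t: "t \<ge> 1"
    have t0: "t > 0" using t by simp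
    show "(F has_real_derivative F' t) (at t)"
      unfolding F_def[abs_def] F'_def I_def I'_def
      by (rule DERIV_cdivide, rule I_deriv[OF sm _ t0 R]) (use cf in auto)
    show "F t > 0" using Ipos[OF t] Zp by (simp add: F_def)
    have "I' t \<ge> - lam * I t + Z * (I t / Z) powr p"
      unfolding I'_def I_def Z_def lam_def n_def
      by (rule deriv_ineq[OF sm cf pos pde t0 R p]) (use t0 Zp Ipos[OF t] in \<open>auto simp: Z_def I_def\<close>)
    then have "I' t / Z \<ge> (- lam * I t + Z * (I t / Z) powr p) / Z"
      using Zp by (intro divide_right_mono) auto
    then show "F' t \<ge> - lam * F t + F t powr p"
    proof -
      have "(- lam * I t + Z * (I t / Z) powr p) / Z = - lam * (I t / Z) + (I t / Z) powr p"
        using Zp by (simp add: diff_divide_distrib)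
      then show ?thesis using \<open>I' t / Z \<ge> _\<close> by (simp add: F_def F'_def)
    qed
  next
    show "p > 1" by fact
    show "lam > 0" by fact
    have I1: "I 1 \<ge> (27/64) ^ CARD('n) * mu * 2 ^ CARD('n)"
      unfolding I_def using mu by (intro I_lower[of f 1, OF cf1 pos1 _ _ R]) auto
    have F1: "F 1 \<ge> kap / R ^ CARD('n)"
    proof -
      have "kap / R ^ CARD('n) = (27/64) ^ CARD('n) * mu * 2 ^ CARD('n) / (4 * R) ^ CARD('n)"
      proof -
        define A where "A = (27/64::real) ^ CARD('n)"
        define B where "B = (2::real) ^ CARD('n)"
        define C where "C = (4::real) ^ CARD('n)"
        have C0: "C > 0" by (simp add: C_def)
        have e: "(27/128::real) ^ CARD('n) = A * B / C"
        proof -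
          have "(27/128::real) = (27/64) * 2 / 4" by simp
          then have "(27/128::real) ^ CARD('n) = ((27/64) * 2 / 4) ^ CARD('n)" by simp
          also have "\<dots> = A * B / C" unfolding A_def B_def C_def by (simp only: power_mult_distrib power_divide)
          finally show ?thesis .
        qed
        have f: "(4 * R) ^ CARD('n) = C * R ^ CARD('n)" by (simp add: C_def power_mult_distrib)
        show ?thesis unfolding kap_def e f A_def[symmetric] B_def[symmetric] using C0 R0 by simp
      qed
      also have "\<dots> \<le> I 1 / (4 * R) ^ CARD('n)"
        using I1 R0 by (intro divide_right_mono) auto
      also have "\<dots> \<le> I 1 / Z"
        using Zp Zup Ipos[of 1] by (intro divide_left_mono) auto
      finally show ?thesis by (simp add: F_def)
    qed
    have "(kap / R ^ CARD('n)) powr (p - 1) = kap powr (p - 1) / R powr (n * (p - 1))"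
      using kap R0 by (simp add: powr_divide powr_realpow[symmetric] powr_powr n_def)
    also have "R powr (n * (p - 1)) = R powr 2 / R powr d"
    proof -
      have "2 - d = n * (p - 1)" by (simp add: d_def)
      then show ?thesis using powr_diff[of R 2 d] by (simp only:)
    qed
    also have "kap powr (p - 1) / (R powr 2 / R powr d) = kap powr (p - 1) * R powr d / R^2"
    proof -
      have r2: "R powr 2 = R^2" using R0 by (simp add: powr_numeral)
      show ?thesis by (simp only: r2) (simp add: divide_divide_eq_right)
    qed
    also have "\<dots> \<ge> kap powr (p - 1) * X / R^2"
      using RX kap R0 by (intro divide_right_mono mult_left_mono) auto
    also have "kap powr (p - 1) * X = 10 * n + 1" using kap by (simp add: X_def)
    finally have A: "(kap / R ^ CARD('n)) powr (p - 1) \<ge> (10 * n + 1) / R^2" .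
    have B: "(10 * n + 1) / R^2 > lam" using R0 by (simp add: lam_def divide_strict_right_mono)
    have C: "F 1 powr (p - 1) \<ge> (kap / R ^ CARD('n)) powr (p - 1)"
      using F1 kap R0 p by (intro powr_mono2) auto
    show "F 1 powr (p - 1) > lam" using A B C by linarith
  qed
qed


end
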